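(* Let $W$ be a finite set of possible worlds and let $G=(2^W,\gg)$ and $G'=(2^W,\gg')$ be complete belief algebras on $W$. Then: (1) $\operatorname{Gen}(\Omega)=G$, where $\Omega=\{(\{\omega\},\{\omega'\})\mid \omega,\omega'\in W,\ \{\omega\}\gg\{\omega'\}\}$; (2) if for all $\omega,\omega'\in W$ we have $(\{\omega\},\{\omega'\})\in G$ iff $(\{\omega\},\{\omega'\})\in G'$, then $G=G'$.
   Context: $R_W=\{(U,V)\mid U,V\subseteq W,\ U\cap V=\varnothing\}$. A belief algebra on $W$ is a pair $(2^W,\gg)$, $\gg$ a binary relation on $2^W$, such that for all $U,V,U_1,V_1,U_2,V_2\subseteq W$: (A0) $\gg\subseteq R_W$; (A1) $U\gg\varnothing$ iff $U\neq\varnothing$; (A2) if $U\gg V$ then not $V\gg U$; (A3) if $U_1\supseteq U$, $U\gg V$, $V\supseteq V_1$ and $U_1\cap V_1=\varnothing$, then $U_1\gg V_1$; (A4) if $U=U_1\cup V_1=U_2\cup V_2$, $U_1\gg V_1$ and $U_2\gg V_2$, then $U_1\cap U_2\gg V_1\cup V_2$. A belief algebra is identified with its relation as a set of pairs. A complete belief algebra (CBA) is a belief algebra of the form $U\gg V$ iff $U\cap V=\varnothing$ and there is $\omega_1\in U$ with $\omega_1\prec\omega_2$ for all $\omega_2\in V$, for some total preorder $\preceq$ on $W$ (where $\omega\prec\omega'$ iff $\omega\preceq\omega'$ and not $\omega'\preceq\omega$). For $\Omega\subseteq R_W$, $\operatorname{Gen}(\Omega)$ is the smallest subset of $R_W$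 that contains $\Omega$, contains $(U,\varnothing)$ for every nonempty $U\subseteq W$, and is closed under: if $(U,V)$ is in it, $U\subseteq U_1$, $V_1\subseteq V$ and $U_1\cap V_1=\varnothing$, then $(U_1,V_1)$ is in it; if $U_1\cup V_1=U_2\cup V_2$ and $(U_1,V_1),(U_2,V_2)$ are in it, then $(U_1\cap U_2,V_1\cup V_2)$ is in it. *)

theory Defs
  imports Main
begin

definition R_W :: "'a set \<Rightarrow> ('a set \<times> 'a set) set" where
  "R_W W = {(U, V). U \<subseteq> W \<and> V \<subseteq> W \<and> U \<inter> V = {}}"

definition belief_algebra :: "'a set \<Rightarrow> ('a set \<times> 'a set) set \<Rightarrow> bool" where
  "belief_algebra W G \<longleftrightarrow>
     G \<subseteq> R_W W \<and>
     (\<forall>U. U \<subseteq> W \<longrightarrow> ((U, {}) \<in> G \<longleftrightarrow> U \<noteq> {})) \<and>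
     (\<forall>U V. U \<subseteq> W \<longrightarrow> V \<subseteq> W \<longrightarrow> (U, V) \<in> G \<longrightarrow> (V, U) \<notin> G) \<and>
     (\<forall>U V U1 V1. U \<subseteq> W \<longrightarrow> V \<subseteq> W \<longrightarrow> U1 \<subseteq> W \<longrightarrow> V1 \<subseteq> W \<longrightarrow>
        U \<subseteq> U1 \<longrightarrow> (U, V) \<in> G \<longrightarrow> V1 \<subseteq> V \<longrightarrow> U1 \<inter> V1 = {} \<longrightarrow> (U1, V1) \<in> G) \<and>
     (\<forall>U U1 V1 U2 V2. U \<subseteq> W \<longrightarrow> U1 \<subseteq> W \<longrightarrow> V1 \<subseteq> W \<longrightarrow> U2 \<subseteq> W \<longrightarrow> V2 \<subseteq> W \<longrightarrow>
        U = U1 \<union> V1 \<longrightarrow> U = U2 \<union> V2 \<longrightarrow> (U1, V1) \<in> G \<longrightarrow> (U2, V2) \<in> G \<longrightarrow>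
        (U1 \<inter> U2, V1 \<union> V2) \<in> G)"

text \<open>A total preorder on W, given as a relation P \<subseteq> W \<times> W; (x, y) \<in> P means x \<preceq> y.\<close>
definition total_preorder_on :: "'a set \<Rightarrow> 'a rel \<Rightarrow> bool" where
  "total_preorder_on W P \<longleftrightarrow> P \<subseteq> W \<times> W \<and> refl_on W P \<and> trans P \<and> total_on W P"

definition strict_of :: "'a rel \<Rightarrow> 'a \<Rightarrow> 'a \<Rightarrow> bool" where
  "strict_of P x y \<longleftrightarrow> (x, y) \<in> P \<and> (y, x) \<notin> P"

definition induced_algebra :: "'a set \<Rightarrow> 'a rel \<Rightarrow> ('a set \<times> 'a set) set" where
  "induced_algebra W P = {(U, V). U \<subseteq> W \<and> V \<subseteq> W \<and> U \<inter> V = {} \<and>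
      (\<exists>w1\<in>U. \<forall>w2\<in>V. strict_of P w1 w2)}"

definition complete_belief_algebra :: "'a set \<Rightarrow> ('a set \<times> 'a set) set \<Rightarrow> bool" where
  "complete_belief_algebra W G \<longleftrightarrow> belief_algebra W G \<and>
     (\<exists>P. total_preorder_on W P \<and> G = induced_algebra W P)"

inductive_set Gen :: "'a set \<Rightarrow> ('a set \<times> 'a set) set \<Rightarrow> ('a set \<times> 'a set) set"
  for W :: "'a set" and \<Omega> :: "('a set \<times> 'a set) set" where
  base: "p \<in> \<Omega> \<Longrightarrow> p \<in> Gen W \<Omega>"
| triv: "U \<subseteq> W \<Longrightarrow> U \<noteq> {} \<Longrightarrow> (U, {}) \<in> Gen W \<Omega>"
| mono: "(U, V) \<in> Gen W \<Omega> \<Longrightarrow> U \<subseteq> U1 \<Longrightarrow> U1 \<subseteq> W \<Longrightarrow> V1 \<subseteq> V \<Longrightarrow> U1 \<inter> V1 = {}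
         \<Longrightarrow> (U1, V1) \<in> Gen W \<Omega>"
| meet: "(U1, V1) \<in> Gen W \<Omega> \<Longrightarrow> (U2, V2) \<in> Gen W \<Omega> \<Longrightarrow> U1 \<union> V1 = U2 \<union> V2
         \<Longrightarrow> (U1 \<inter> U2, V1 \<union> V2) \<in> Gen W \<Omega>"

end

theory Submission
  imports Defs
begin

lemma Gen_sub:
  assumes ba: "belief_algebra W G" and om: "\<Omega> \<subseteq> G"
  shows "p \<in> Gen W \<Omega> \<Longrightarrow> p \<in> G"
proof -
  have BA: "G \<subseteq> R_W W \<and>
     (\<forall>U. U \<subseteq> W \<longrightarrow> ((U, {}) \<in> G \<longleftrightarrow> U \<noteq> {})) \<and>
     (\<forall>U V. U \<subseteq> W \<longrightarrow> V \<subseteq> W \<longrightarrow> (U, V) \<in> G \<longrightarrow> (V, U) \<notin> G) \<and>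
     (\<forall>U V U1 V1. U \<subseteq> W \<longrightarrow> V \<subseteq> W \<longrightarrow> U1 \<subseteq> W \<longrightarrow> V1 \<subseteq> W \<longrightarrow>
        U \<subseteq> U1 \<longrightarrow> (U, V) \<in> G \<longrightarrow> V1 \<subseteq> V \<longrightarrow> U1 \<inter> V1 = {} \<longrightarrow> (U1, V1) \<in> G) \<and>
     (\<forall>U U1 V1 U2 V2. U \<subseteq> W \<longrightarrow> U1 \<subseteq> W \<longrightarrow> V1 \<subseteq> W \<longrightarrow> U2 \<subseteq> W \<longrightarrow> V2 \<subseteq> W \<longrightarrow>
        U = U1 \<union> V1 \<longrightarrow> U = U2 \<union> V2 \<longrightarrow> (U1, V1) \<in> G \<longrightarrow> (U2, V2) \<in> G \<longrightarrow>
        (U1 \<inter> U2, V1 \<union> V2) \<in> G)"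
    using ba unfolding belief_algebra_def .
  note C = conjunct1[OF BA] conjunct1[OF conjunct2[OF BA]]
    conjunct1[OF conjunct2[OF conjunct2[OF conjunct2[OF BA]]]]
    conjunct2[OF conjunct2[OF conjunct2[OF conjunct2[OF BA]]]]
  have A0: "G \<subseteq> R_W W" by (rule C(1))
  have A1: "\<And>U. U \<subseteq> W \<Longrightarrow> U \<noteq> {} \<Longrightarrow> (U, {}) \<in> G" using C(2) by blast
  have A3: "\<And>U V U1 V1. U \<subseteq> W \<Longrightarrow> V \<subseteq> W \<Longrightarrow> U1 \<subseteq> W \<Longrightarrow> V1 \<subseteq> W \<Longrightarrow>
        U \<subseteq> U1 \<Longrightarrow> (U, V) \<in> G \<Longrightarrow> V1 \<subseteq> V \<Longrightarrow> U1 \<inter> V1 = {} \<Longrightarrow> (U1, V1) \<in> G"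
    using C(3) by blast
  have A4: "\<And>U U1 V1 U2 V2. U \<subseteq> W \<Longrightarrow> U1 \<subseteq> W \<Longrightarrow> V1 \<subseteq> W \<Longrightarrow> U2 \<subseteq> W \<Longrightarrow> V2 \<subseteq> W \<Longrightarrow>
        U = U1 \<union> V1 \<Longrightarrow> U = U2 \<union> V2 \<Longrightarrow> (U1, V1) \<in> G \<Longrightarrow> (U2, V2) \<in> G \<Longrightarrow>
        (U1 \<inter> U2, V1 \<union> V2) \<in> G"
    using C(4) by blast
  have RW: "\<And>U V. (U, V) \<in> G \<Longrightarrow> U \<subseteq> W \<and> V \<subseteq> W" using A0 unfolding R_W_def by blast
  show "p \<in> Gen W \<Omega> \<Longrightarrow> p \<in> G"
  proof (induction p rule: Gen.induct)
    case (base p) then show ?case using om by blast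
  next
    case (triv U) then show ?case using A1 by blast
  next
    case (mono U V U1 V1)
    from RW[OF mono.IH] have "U \<subseteq> W" "V \<subseteq> W" by auto
    then show ?case using A3[of U V U1 V1] mono by blast
  next
    case (meet U1 V1 U2 V2)
    from RW[OF meet.IH(1)] RW[OF meet.IH(2)] have "U1 \<subseteq> W" "V1 \<subseteq> W" "U2 \<subseteq> W" "V2 \<subseteq> W" by auto
    then show ?case using A4[of "U1 \<union> V1" U1 V1 U2 V2] meet by simp
  qed
qed

lemma sub_Gen:
  assumes fin: "finite W" and G: "G = induced_algebra W P"
    and uv: "(U, V) \<in> G"
  shows "(U, V) \<in> Gen W {({w}, {w'}) | w w'. w \<in> W \<and> w' \<in> W \<and> ({w}, {w'}) \<in> G}"
    (is "_ \<in> Gen W ?O")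
proof -
  from uv G have "U \<subseteq> W \<and> V \<subseteq> W \<and> U \<inter> V = {} \<and> (\<exists>w1\<in>U. \<forall>w2\<in>V. strict_of P w1 w2)"
    unfolding induced_algebra_def by simp
  then obtain w1 where w1: "w1 \<in> U" "\<forall>w2\<in>V. strict_of P w1 w2"
    and UW: "U \<subseteq> W" and VW: "V \<subseteq> W" and disj: "U \<inter> V = {}"
    by blast
  have w1W: "w1 \<in> W" using w1 UW by blast
  have fV: "finite V" using finite_subset[OF VW fin] .
  have step: "({w1}, insert x A) \<in> Gen W ?O"
    if IH: "({w1}, A) \<in> Gen W ?O" and xA: "insert x A \<subseteq> V" and xnA: "x \<notin> A" for x A
  proof -
      have xW: "x \<in> W" using xA VW by blast
      have AW: "A \<subseteq> W" using xA VW by blast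
      have w1x: "w1 \<notin> insert x A" using xA disj w1 by blast
      have sx: "strict_of P w1 x" using w1(2) xA by blast
      have "({w1}, {x}) \<in> induced_algebra W P" unfolding induced_algebra_def
        using sx w1W xW w1x by blast
      then have "({w1}, {x}) \<in> G" using G by simp
      then have "({w1}, {x}) \<in> ?O" using w1W xW by blast
      then have b: "({w1}, {x}) \<in> Gen W ?O" by (rule Gen.base)
      have m1: "({w1, x}, A) \<in> Gen W ?O"
        by (rule Gen.mono[OF IH]) (use w1x w1W xW xnA in auto)
      have m2: "({w1} \<union> A, {x}) \<in> Gen W ?O"
        by (rule Gen.mono[OF b]) (use w1x w1W AW xnA in auto)
      have "({w1, x} \<inter> ({w1} \<union> A), A \<union> {x}) \<in> Gen W ?O"
        by (rule Gen.meet[OF m1 m2]) auto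
      moreover have "{w1, x} \<inter> ({w1} \<union> A) = {w1}" using xnA by auto
      moreover have "A \<union> {x} = insert x A" by auto
      ultimately show "({w1}, insert x A) \<in> Gen W ?O" by (simp only:)
  qed
  have "finite A \<Longrightarrow> A \<subseteq> V \<Longrightarrow> ({w1}, A) \<in> Gen W ?O" for A
  proof (induction A rule: finite_induct)
    case empty show ?case using w1W by (intro Gen.triv) auto
  next
    case (insert x A)
    then show ?case using step by blast
  qed
  then have "({w1}, V) \<in> Gen W ?O" using fV by blast
  moreover have "{w1} \<subseteq> U" using w1 by simp
  ultimately show ?thesis by (rule Gen.mono[OF _ _ UW subset_refl disj])
qed

theorem corollary1:
  fixes W :: "'a set" and G G' :: "('a set \<times> 'a set) set"
  assumes "finite W"
    and "complete_belief_algebra W G"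
    and "complete_belief_algebra W G'"
  shows "Gen W {({w}, {w'}) | w w'. w \<in> W \<and> w' \<in> W \<and> ({w}, {w'}) \<in> G} = G \<and>
     ((\<forall>w\<in>W. \<forall>w'\<in>W. ({w}, {w'}) \<in> G \<longleftrightarrow> ({w}, {w'}) \<in> G') \<longrightarrow> G = G')"
proof -
  have eq: "Gen W {({w}, {w'}) | w w'. w \<in> W \<and> w' \<in> W \<and> ({w}, {w'}) \<in> H} = H"
    if "complete_belief_algebra W H" for H :: "('a set \<times> 'a set) set"
  proof -
    from that obtain P where ba: "belief_algebra W H" and H: "H = induced_algebra W P"
      unfolding complete_belief_algebra_def by blast
    show ?thesis
    proof
      show "Gen W {({w}, {w'}) | w w'. w \<in> W \<and> w' \<in> W \<and> ({w}, {w'}) \<in> H} \<subseteq> H"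
      proof (rule subsetI)
        fix p assume "p \<in> Gen W {({w}, {w'}) | w w'. w \<in> W \<and> w' \<in> W \<and> ({w}, {w'}) \<in> H}"
        moreover have "{({w}, {w'}) | w w'. w \<in> W \<and> w' \<in> W \<and> ({w}, {w'}) \<in> H} \<subseteq> H" by blast
        ultimately show "p \<in> H" using Gen_sub[OF ba] by blast
      qed
      show "H \<subseteq> Gen W {({w}, {w'}) | w w'. w \<in> W \<and> w' \<in> W \<and> ({w}, {w'}) \<in> H}"
      proof (rule subsetI)
        fix p assume p: "p \<in> H"
        obtain U V where "p = (U, V)" by (cases p)
        then show "p \<in> Gen W {({w}, {w'}) | w w'. w \<in> W \<and> w' \<in> W \<and> ({w}, {w'}) \<in> H}"
          using sub_Gen[OF assms(1) H, of U V] p by simp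
      qed
    qed
  qed
  have "(\<forall>w\<in>W. \<forall>w'\<in>W. ({w}, {w'}) \<in> G \<longleftrightarrow> ({w}, {w'}) \<in> G') \<longrightarrow> G = G'"
  proof
    assume h: "\<forall>w\<in>W. \<forall>w'\<in>W. ({w}, {w'}) \<in> G \<longleftrightarrow> ({w}, {w'}) \<in> G'"
    have "{({w}, {w'}) | w w'. w \<in> W \<and> w' \<in> W \<and> ({w}, {w'}) \<in> G}
        = {({w}, {w'}) | w w'. w \<in> W \<and> w' \<in> W \<and> ({w}, {w'}) \<in> G'}"
      using h by blast
    then have "Gen W {({w}, {w'}) | w w'. w \<in> W \<and> w' \<in> W \<and> ({w}, {w'}) \<in> G}
        = Gen W {({w}, {w'}) | w w'. w \<in> W \<and> w' \<in> W \<and> ({w}, {w'}) \<in> G'}" by (rule arg_cong)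
    then show "G = G'" unfolding eq[OF assms(2)] eq[OF assms(3)] .
  qed
  with eq[OF assms(2)] show ?thesis by (rule conjI)
qed

end
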